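(* Let $n\ge 1$ be an integer and $\alpha,\beta\in(0,1]$. For every configuration $\mathcal{C}\in\{\bullet,\circ\}^n$ set $$\mathbb{P}^{\mathrm{st}}_n\{\mathcal{C}\} := Z_n^{-1}\sum_{T\in\mathcal{T}_n,\ R(T)=\mathcal{C}} \mu(T), \qquad Z_n:=\sum_{T\in\mathcal{T}_n}\mu(T),$$ where $\mu(T)=\alpha^{-l(T)}\beta^{-r(T)}$. Then $\mathbb{P}^{\mathrm{st}}_n$ is a stationary measure of the $n$-site open-boundary TASEP with parameters $\alpha,\beta$. That is, for every $\mathcal{C}$, $$\mathbb{P}^{\mathrm{st}}_n\{\mathcal{C}\}\sum_{\mathcal{C}'}W(\mathcal{C}\to\mathcal{C}')=\sum_{\mathcal{C}'}\mathbb{P}^{\mathrm{st}}_n\{\mathcal{C}'\}\,W(\mathcal{C}'\to\mathcal{C}).$$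
   Context: Open-boundary TASEP on $n$ sites: this is the continuous-time Markov chain on $\{\bullet,\circ\}^n$ (strings of length $n$, where $\bullet$ denotes a particle and $\circ$ a hole). Its transition rates are as follows, with $\mathcal{A},\mathcal{A}'$ arbitrary strings: - $W(\circ\mathcal{A}\to\bullet\mathcal{A})=\alpha$; - $W(\mathcal{A}\bullet\to\mathcal{A}\circ)=\beta$; - $W(\mathcal{A}\bullet\circ\mathcal{A}'\to\mathcal{A}\circ\bullet\mathcal{A}')=1$; - $W(\mathcal{C}\to\mathcal{C}')=0$ for all other pairs. A plane binary tree is a finite rooted tree in which every vertex is either an endpoint (a leaf, with no children) or has exactly two children, an ordered left child and right child. Every non-root vertex is thus either a left descendent or a right descendent of its parent. The endpoints are ordered from left to right in the planar order. $\mathcal{T}_n$ denotes the set of plane binary trees with exactly $n+2$ endpoints. The reduced configuration of $T\in\mathcal{T}_n$ is $R(T)=(t_1,\dots,t_n)\in\{\bullet,\circ\}^n$. Here $t_k=\bullet$ if the $(k+1)$-th endpoint from the left is a left child, and $t_k=\circ$ if it is a right child. The leftmost and rightmost endpoints are ignored. $l(T)$ (respectively $r(T)$) is the number of vertices lying strictly between the leftmost (respectively rightmost) endpoint and the root on the path joining them, excluding both the endpoint and the root. *)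

theory Defs
  imports Complex_Main
begin

text \<open>Configurations: lists of booleans, True = particle, False = hole.\<close>

datatype ptree = Leaf | Node ptree ptree

fun num_leaves :: "ptree \<Rightarrow> nat" where
  "num_leaves Leaf = 1"
| "num_leaves (Node l r) = num_leaves l + num_leaves r"

definition trees :: "nat \<Rightarrow> ptree set" where
  "trees n = {T. num_leaves T = n + 2}"

text \<open>Sides of the endpoints, left to right, of a subtree which is a left child (True)
  or a right child (False).\<close>
fun leaf_sides :: "bool \<Rightarrow> ptree \<Rightarrow> bool list" where
  "leaf_sides b Leaf = [b]"
| "leaf_sides b (Node l r) = leaf_sides True l @ leaf_sides False r"

fun root_sides :: "ptree \<Rightarrow> bool list" where
  "root_sides Leaf = []"
| "root_sides (Node l r) = leaf_sides True l @ leaf_sides False r"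

definition reduced :: "ptree \<Rightarrow> bool list" where
  "reduced T = butlast (tl (root_sides T))"

fun left_depth :: "ptree \<Rightarrow> nat" where
  "left_depth Leaf = 0"
| "left_depth (Node l r) = Suc (left_depth l)"

fun right_depth :: "ptree \<Rightarrow> nat" where
  "right_depth Leaf = 0"
| "right_depth (Node l r) = Suc (right_depth r)"

text \<open>Number of vertices strictly between the endpoint and the root.\<close>
definition lT :: "ptree \<Rightarrow> nat" where "lT T = left_depth T - 1"
definition rT :: "ptree \<Rightarrow> nat" where "rT T = right_depth T - 1"

definition mu :: "real \<Rightarrow> real \<Rightarrow> ptree \<Rightarrow> real" where
  "mu \<alpha> \<beta> T = (1 / \<alpha>) ^ lT T * (1 / \<beta>) ^ rT T"

definition Zn :: "real \<Rightarrow> real \<Rightarrow> nat \<Rightarrow> real" where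
  "Zn \<alpha> \<beta> n = (\<Sum>T\<in>trees n. mu \<alpha> \<beta> T)"

definition Pst :: "real \<Rightarrow> real \<Rightarrow> nat \<Rightarrow> bool list \<Rightarrow> real" where
  "Pst \<alpha> \<beta> n C = (\<Sum>T\<in>{T \<in> trees n. reduced T = C}. mu \<alpha> \<beta> T) / Zn \<alpha> \<beta> n"

definition configs :: "nat \<Rightarrow> bool list set" where
  "configs n = {C. length C = n}"

text \<open>TASEP transition rates (the three kinds of transitions never coincide).\<close>
definition W :: "real \<Rightarrow> real \<Rightarrow> bool list \<Rightarrow> bool list \<Rightarrow> real" where
  "W \<alpha> \<beta> C C' =
     (if \<exists>A. C = False # A \<and> C' = True # A then \<alpha> else 0)
   + (if \<exists>A. C = A @ [True] \<and> C' = A @ [False] then \<beta> else 0)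
   + (if \<exists>A A'. C = A @ [True, False] @ A' \<and> C' = A @ [False, True] @ A' then 1 else 0)"

end

theory Submission
  imports Defs
begin

fun expand :: "nat \<Rightarrow> ptree \<Rightarrow> ptree" where
  "expand k Leaf = Node Leaf Leaf"
| "expand k (Node l r) = (if k < num_leaves l then Node (expand k l) r
      else Node l (expand (k - num_leaves l) r))"

lemma nl_pos: "num_leaves t \<ge> 1"
  by (induction t) auto

lemma nl_expand: "num_leaves (expand k t) = Suc (num_leaves t)"
  by (induction k t rule: expand.induct) auto

lemma length_ls: "length (leaf_sides b t) = num_leaves t"
  by (induction b t rule: leaf_sides.induct) auto

lemma ls_expand: "k < num_leaves t \<Longrightarrow>
  leaf_sides b (expand k t) = take k (leaf_sides b t) @ True # False # drop (Suc k) (leaf_sides b t)"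
proof (induction t arbitrary: b k)
  case Leaf
  then show ?case by simp
next
  case (Node l r)
  show ?case
  proof (cases "k < num_leaves l")
    case True
    then show ?thesis using Node by (simp add: length_ls)
  next
    case False
    then have "k - num_leaves l < num_leaves r" using Node.prems by simp
    then show ?thesis using Node False by (simp add: length_ls Suc_diff_le)
  qed
qed

lemma ld_expand: "k < num_leaves t \<Longrightarrow>
  left_depth (expand k t) = (if k = 0 then Suc (left_depth t) else left_depth t)"
proof (induction t arbitrary: k)
  case (Node l r) then show ?case using nl_pos[of l] by auto
qed simp

lemma rd_expand: "k < num_leaves t \<Longrightarrow>
  right_depth (expand k t) = (if k = num_leaves t - 1 then Suc (right_depth t) else right_depth t)"
proof (induction t arbitrary: k)
  case (Node l r) then show ?case using nl_pos[of l] nl_pos[of r] by auto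
qed simp

lemma expand_not_leaf: "expand k t \<noteq> Leaf" "Leaf \<noteq> expand k t"
  by (cases t; auto)+

lemma expand_inj: "k < num_leaves t1 \<Longrightarrow> k < num_leaves t2 \<Longrightarrow> expand k t1 = expand k t2 \<Longrightarrow> t1 = t2"
proof (induction t1 arbitrary: k t2)
  case Leaf
  then show ?case by (cases t2) (auto simp: expand_not_leaf split: if_splits)
next
  case (Node l r)
  show ?case
  proof (cases t2)
    case Leaf then show ?thesis using Node.prems by (auto simp: expand_not_leaf split: if_splits)
  next
    case (Node l2 r2)
    show ?thesis
    proof (cases "k < num_leaves l")
      case True
      then show ?thesis using Node Node.prems Node.IH(1)[of k l2] nl_expand[of k l]
        by (auto split: if_splits)
    next
      case False
      then show ?thesis using Node Node.prems Node.IH(2)[of "k - num_leaves l" r2] nl_expand[of _ l2]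
        by (auto split: if_splits)
    qed
  qed
qed

lemma ls_first: "leaf_sides b t ! 0 = (if t = Leaf then b else True)"
proof (induction b t rule: leaf_sides.induct)
  case (2 b l r)
  then show ?case using nl_pos[of l] by (auto simp: nth_append length_ls)
qed simp

lemma ls_last: "leaf_sides b t ! (num_leaves t - 1) = (if t = Leaf then b else False)"
proof (induction b t rule: leaf_sides.induct)
  case (2 b l r)
  then show ?case using nl_pos[of l] nl_pos[of r] by (auto simp: nth_append length_ls)
qed simp

lemma contract: "Suc k < num_leaves t \<Longrightarrow> leaf_sides b t ! k \<Longrightarrow> \<not> leaf_sides b t ! Suc k
  \<Longrightarrow> \<exists>t0. t = expand k t0 \<and> k < num_leaves t0"
proof (induction t arbitrary: b k)
  case Leaf
  then show ?case by simp
next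
  case (Node l r)
  consider "Suc k < num_leaves l" | "Suc k = num_leaves l" | "num_leaves l \<le> k" by linarith
  then show ?case
  proof cases
    case 1
    then have "leaf_sides True l ! k" "\<not> leaf_sides True l ! Suc k"
      using Node.prems by (auto simp: nth_append length_ls)
    then obtain l0 where "l = expand k l0" "k < num_leaves l0" using Node.IH(1) 1 by blast
    then show ?thesis
      by (intro exI[of _ "Node l0 r"]) auto
  next
    case 2
    then have k: "num_leaves l - 1 = k" by simp
    have a: "leaf_sides True l ! (num_leaves l - 1)" "\<not> leaf_sides False r ! 0"
      unfolding k using Node.prems 2 by (auto simp: nth_append length_ls)
    then have "l = Leaf" "r = Leaf" using ls_last[of True l] ls_first[of False r] by (auto split: if_splits)
    then show ?thesis using 2 by (intro exI[of _ Leaf]) auto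
  next
    case 3
    then have "leaf_sides False r ! (k - num_leaves l)" "\<not> leaf_sides False r ! Suc (k - num_leaves l)"
      "Suc (k - num_leaves l) < num_leaves r"
      using Node.prems by (auto simp: nth_append length_ls Suc_diff_le)
    then obtain r0 where "r = expand (k - num_leaves l) r0" "k - num_leaves l < num_leaves r0"
      using Node.IH(2) by blast
    then show ?thesis using 3
      by (intro exI[of _ "Node l r0"]) auto
  qed
qed

lemma decomp: "k < num_leaves t0 \<Longrightarrow> leaf_sides b (expand k t0) = p @ True # False # q \<Longrightarrow> length p = k
   \<Longrightarrow> leaf_sides b t0 = p @ (leaf_sides b t0 ! k) # q"
proof -
  assume a: "k < num_leaves t0" "leaf_sides b (expand k t0) = p @ True # False # q" "length p = k"
  let ?s = "leaf_sides b t0"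
  have "take k ?s @ True # False # drop (Suc k) ?s = p @ True # False # q"
    using a ls_expand by simp
  moreover have "length (take k ?s) = length p" using a by (simp add: length_ls)
  ultimately have "take k ?s = p" "drop (Suc k) ?s = q" by auto
  then show ?thesis using id_take_nth_drop[of k ?s] a by (simp add: length_ls)
qed


definition fw :: "real \<Rightarrow> real \<Rightarrow> bool list \<Rightarrow> real" where
  "fw a b C = (\<Sum>T\<in>{T. leaf_sides False T = True # C @ [False]}. mu a b T)"

lemma finite_nl: "finite {T. num_leaves T \<le> k}"
proof (induction k)
  case 0
  have "{T. num_leaves T \<le> 0} = {}" using nl_pos[THEN order.trans] by fastforce
  then show ?case by (metis finite.emptyI)
next
  case (Suc k)
  have "{T. num_leaves T \<le> Suc k} \<subseteq> insert Leaf ((\<lambda>(l,r). Node l r) ` ({T. num_leaves T \<le> k} \<times> {T. num_leaves T \<le> k}))"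
  proof
    fix T assume "T \<in> {T. num_leaves T \<le> Suc k}"
    then show "T \<in> insert Leaf ((\<lambda>(l,r). Node l r) ` ({T. num_leaves T \<le> k} \<times> {T. num_leaves T \<le> k}))"
    proof (cases T)
      case (Node l r)
      then show ?thesis using \<open>T \<in> _\<close> nl_pos[of l] nl_pos[of r] by force
    qed simp
  qed
  then show ?case using Suc by (auto intro: finite_subset)
qed

lemma finite_ls: "finite {T. leaf_sides b T = w}"
  by (rule finite_subset[OF _ finite_nl[of "length w"]]) (auto simp: length_ls)

lemma mu_interior: "0 < k \<Longrightarrow> Suc k < num_leaves T \<Longrightarrow> mu a b (expand k T) = mu a b T"
proof -
  assume k: "0 < k" "Suc k < num_leaves T"
  then have "k \<noteq> num_leaves T - 1" "k \<noteq> 0" "k < num_leaves T" by auto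
  then show ?thesis unfolding mu_def lT_def rT_def using ld_expand[of k T] rd_expand[of k T] by simp
qed

lemma ld_pos: "T \<noteq> Leaf \<Longrightarrow> left_depth T \<ge> 1" by (cases T) auto
lemma rd_pos: "T \<noteq> Leaf \<Longrightarrow> right_depth T \<ge> 1" by (cases T) auto
lemma nl_2: "T \<noteq> Leaf \<Longrightarrow> num_leaves T \<ge> 2"
  by (cases T) (auto, metis add_mono nl_pos one_add_one)

lemma mu_last: "T \<noteq> Leaf \<Longrightarrow> mu a b (expand (num_leaves T - 1) T) = (1/b) * mu a b T"
proof -
  assume T: "T \<noteq> Leaf"
  have "num_leaves T - 1 \<noteq> 0" using nl_2[OF T] by simp
  moreover have "num_leaves T - 1 < num_leaves T" using nl_pos[of T] by simp
  moreover obtain d where "right_depth T = Suc d" using rd_pos[OF T] by (cases "right_depth T") auto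
  ultimately show ?thesis
    unfolding mu_def lT_def rT_def by (simp add: ld_expand rd_expand)
qed

lemma mu_first: "T \<noteq> Leaf \<Longrightarrow> mu a b (expand 0 T) = (1/a) * mu a b T"
proof -
  assume T: "T \<noteq> Leaf"
  have "0 \<noteq> num_leaves T - 1" using nl_2[OF T] by simp
  moreover have "0 < num_leaves T" using nl_pos[of T] by simp
  moreover obtain d where "left_depth T = Suc d" using ld_pos[OF T] by (cases "left_depth T") auto
  ultimately show ?thesis
    unfolding mu_def lT_def rT_def by (simp add: ld_expand rd_expand)
qed

lemma relA: "fw a b (u @ True # False # v) = fw a b (u @ True # v) + fw a b (u @ False # v)"
proof -
  define S where "S x = {T. leaf_sides False T = True # u @ x # v @ [False]}" for x
  define S' where "S' = {T. leaf_sides False T = True # u @ True # False # v @ [False]}"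
  define k where "k = Suc (length u)"
  have nlS: "num_leaves T = length u + length v + 3" if "T \<in> S x" for T x
    using that length_ls[of False T] unfolding S_def by simp
  have img: "S' = expand k ` (S True \<union> S False)"
  proof
    show "expand k ` (S True \<union> S False) \<subseteq> S'"
    proof
      fix T' assume "T' \<in> expand k ` (S True \<union> S False)"
      then obtain T x where T: "T \<in> S x" "T' = expand k T" by auto
      then have "k < num_leaves T" using nlS k_def by auto
      then show "T' \<in> S'" using T ls_expand[of k T False] unfolding S_def S'_def k_def by simp
    qed
  next
    show "S' \<subseteq> expand k ` (S True \<union> S False)"
    proof
      fix T' assume T': "T' \<in> S'"
      have l: "num_leaves T' = length u + length v + 4"
        using T' length_ls[of False T'] unfolding S'_def by simp
      have "Suc k < num_leaves T'" "leaf_sides False T' ! k" "\<not> leaf_sides False T' ! Suc k"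
        using T' l unfolding S'_def k_def by (auto simp: nth_append)
      then obtain t0 where t0: "T' = expand k t0" "k < num_leaves t0" using contract by blast
      have "leaf_sides False t0 = (True # u) @ (leaf_sides False t0 ! k) # (v @ [False])"
        by (rule decomp[OF t0(2)]) (use T' t0 in \<open>auto simp: S'_def k_def\<close>)
      then have "t0 \<in> S (leaf_sides False t0 ! k)" unfolding S_def by simp
      then have "t0 \<in> S True \<union> S False" by (cases "leaf_sides False t0 ! k") auto
      then show "T' \<in> expand k ` (S True \<union> S False)" using t0 by auto
    qed
  qed
  have kl: "k < num_leaves T" if "T \<in> S True \<union> S False" for T
    using that nlS[of T] k_def by auto
  have inj: "inj_on (expand k) (S True \<union> S False)"
    by (rule inj_onI) (use kl expand_inj in \<open>blast\<close>)
  have disj: "S True \<inter> S False = {}" unfolding S_def by auto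
  have fin: "finite (S x)" for x unfolding S_def by (rule finite_ls)
  have "fw a b (u @ True # False # v) = sum (mu a b) S'" unfolding fw_def S'_def by simp
  also have "\<dots> = sum (mu a b \<circ> expand k) (S True \<union> S False)"
    unfolding img by (rule sum.reindex[OF inj])
  also have "\<dots> = sum (mu a b) (S True \<union> S False)"
  proof (rule sum.cong)
    fix T assume "T \<in> S True \<union> S False"
    then show "(mu a b \<circ> expand k) T = mu a b T"
      using nlS[of T] unfolding k_def by (auto intro!: mu_interior)
  qed simp
  also have "\<dots> = sum (mu a b) (S True) + sum (mu a b) (S False)"
    by (rule sum.union_disjoint[OF fin fin disj])
  also have "\<dots> = fw a b (u @ True # v) + fw a b (u @ False # v)"
    unfolding fw_def S_def by simp
  finally show ?thesis .
qed

lemma relB: "fw a b (u @ [True]) = (1/b) * fw a b u"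
proof -
  define S where "S = {T. leaf_sides False T = True # u @ [False]}"
  define S' where "S' = {T. leaf_sides False T = True # u @ [True, False]}"
  define k where "k = Suc (length u)"
  have nlS: "num_leaves T = length u + 2" "T \<noteq> Leaf" if "T \<in> S" for T
    using that length_ls[of False T] unfolding S_def by auto
  have img: "S' = expand k ` S"
  proof
    show "expand k ` S \<subseteq> S'"
    proof
      fix T' assume "T' \<in> expand k ` S"
      then obtain T where T: "T \<in> S" "T' = expand k T" by auto
      then have "k < num_leaves T" using nlS k_def by auto
      then show "T' \<in> S'" using T ls_expand[of k T False] unfolding S_def S'_def k_def by simp
    qed
  next
    show "S' \<subseteq> expand k ` S"
    proof
      fix T' assume T': "T' \<in> S'"
      have l: "num_leaves T' = length u + 3"
        using T' length_ls[of False T'] unfolding S'_def by simp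
      have "Suc k < num_leaves T'" "leaf_sides False T' ! k" "\<not> leaf_sides False T' ! Suc k"
        using T' l unfolding S'_def k_def by (auto simp: nth_append)
      then obtain t0 where t0: "T' = expand k t0" "k < num_leaves t0" using contract by blast
      have e: "leaf_sides False t0 = (True # u) @ (leaf_sides False t0 ! k) # []"
        by (rule decomp[OF t0(2)]) (use T' t0 in \<open>auto simp: S'_def k_def\<close>)
      have "length (leaf_sides False t0) = length u + 2" using arg_cong[OF e, of length] by simp
      then have "num_leaves t0 = k + 1" using length_ls[of False t0] k_def by simp
      then have "leaf_sides False t0 ! k = False" using ls_last[of False t0] by (simp split: if_splits)
      then have "t0 \<in> S" using e unfolding S_def by simp
      then show "T' \<in> expand k ` S" using t0 by auto
    qed
  qed
  have inj: "inj_on (expand k) S"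
  proof (rule inj_onI)
    fix x y assume "x \<in> S" "y \<in> S" "expand k x = expand k y"
    then show "x = y" using nlS(1)[of x] nlS(1)[of y] k_def expand_inj[of k x y] by simp
  qed
  have "fw a b (u @ [True]) = sum (mu a b) S'" unfolding fw_def S'_def by simp
  also have "\<dots> = sum (mu a b \<circ> expand k) S"
    unfolding img by (rule sum.reindex[OF inj])
  also have "\<dots> = sum (\<lambda>T. (1/b) * mu a b T) S"
  proof (rule sum.cong)
    fix T assume T: "T \<in> S"
    then have "k = num_leaves T - 1" using nlS k_def by simp
    then show "(mu a b \<circ> expand k) T = (1/b) * mu a b T"
      using mu_last[OF nlS(2)[OF T]] by simp
  qed simp
  also have "\<dots> = (1/b) * fw a b u"
    unfolding fw_def S_def by (simp add: sum_distrib_left)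
  finally show ?thesis .
qed

lemma relC: "fw a b (False # u) = (1/a) * fw a b u"
proof -
  define S where "S = {T. leaf_sides False T = True # u @ [False]}"
  define S' where "S' = {T. leaf_sides False T = True # False # u @ [False]}"
  have nlS: "num_leaves T = length u + 2" "T \<noteq> Leaf" if "T \<in> S" for T
    using that length_ls[of False T] unfolding S_def by auto
  have img: "S' = expand 0 ` S"
  proof
    show "expand 0 ` S \<subseteq> S'"
    proof
      fix T' assume "T' \<in> expand 0 ` S"
      then obtain T where T: "T \<in> S" "T' = expand 0 T" by auto
      then have "0 < num_leaves T" using nlS by auto
      then show "T' \<in> S'" using T ls_expand[of 0 T False] unfolding S_def S'_def by simp
    qed
  next
    show "S' \<subseteq> expand 0 ` S"
    proof
      fix T' assume T': "T' \<in> S'"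
      have l: "num_leaves T' = length u + 3"
        using T' length_ls[of False T'] unfolding S'_def by simp
      have "Suc 0 < num_leaves T'" "leaf_sides False T' ! 0" "\<not> leaf_sides False T' ! Suc 0"
        using T' l unfolding S'_def by (auto simp: nth_append)
      then obtain t0 where t0: "T' = expand 0 t0" "0 < num_leaves t0" using contract by blast
      have e: "leaf_sides False t0 = [] @ (leaf_sides False t0 ! 0) # (u @ [False])"
        by (rule decomp[OF t0(2)]) (use T' t0 in \<open>auto simp: S'_def\<close>)
      have "length (leaf_sides False t0) = length u + 2" using arg_cong[OF e, of length] by simp
      then have "num_leaves t0 = length u + 2" using length_ls[of False t0] by simp
      then have "t0 \<noteq> Leaf" by auto
      then have "leaf_sides False t0 ! 0 = True" using ls_first[of False t0] by simp
      then have "t0 \<in> S" using e unfolding S_def by simp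
      then show "T' \<in> expand 0 ` S" using t0 by auto
    qed
  qed
  have inj: "inj_on (expand 0) S"
  proof (rule inj_onI)
    fix x y assume "x \<in> S" "y \<in> S" "expand 0 x = expand 0 y"
    then show "x = y" using nlS(1)[of x] nlS(1)[of y] expand_inj[of 0 x y] by simp
  qed
  have "fw a b (False # u) = sum (mu a b) S'" unfolding fw_def S'_def by simp
  also have "\<dots> = sum (mu a b \<circ> expand 0) S"
    unfolding img by (rule sum.reindex[OF inj])
  also have "\<dots> = sum (\<lambda>T. (1/a) * mu a b T) S"
    by (rule sum.cong) (use mu_first nlS in auto)
  also have "\<dots> = (1/a) * fw a b u"
    unfolding fw_def S_def by (simp add: sum_distrib_left)
  finally show ?thesis .
qed

lemma Pst_fw: "length C = n \<Longrightarrow> Pst a b n C = fw a b C / Zn a b n"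
proof -
  assume len: "length C = n"
  have "{T \<in> trees n. reduced T = C} = {T. leaf_sides False T = True # C @ [False]}"
  proof (intro set_eqI iffI)
    fix T assume "T \<in> {T \<in> trees n. reduced T = C}"
    then have T: "num_leaves T = n + 2" "reduced T = C" unfolding trees_def by auto
    then obtain l r where lr: "T = Node l r" by (cases T) auto
    let ?s = "leaf_sides False T"
    have rs: "root_sides T = ?s" using lr by simp
    have ls: "length ?s = n + 2" using T length_ls by simp
    have h: "?s ! 0 = True" "?s ! (n+1) = False"
      using ls_first[of False T] ls_last[of False T] T lr by auto
    have "?s = hd ?s # tl ?s" using ls by (cases ?s) auto
    also have "tl ?s = butlast (tl ?s) @ [last (tl ?s)]" using ls by (intro append_butlast_last_id[symmetric]) (cases ?s; auto)
    finally have "?s = hd ?s # butlast (tl ?s) @ [last (tl ?s)]" .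
    moreover have "hd ?s = True" using h ls by (cases ?s) auto
    moreover have "last (tl ?s) = False"
    proof -
      have "tl ?s \<noteq> []" using ls by (cases ?s) auto
      then have "last (tl ?s) = tl ?s ! n" using ls by (simp add: last_conv_nth)
      then show ?thesis using h ls by (simp add: nth_tl)
    qed
    ultimately show "T \<in> {T. leaf_sides False T = True # C @ [False]}"
      using T(2) rs unfolding reduced_def by simp
  next
    fix T assume "T \<in> {T. leaf_sides False T = True # C @ [False]}"
    then have T: "leaf_sides False T = True # C @ [False]" by simp
    then have "num_leaves T = n + 2" using length_ls[of False T] len by simp
    moreover then obtain l r where lr: "T = Node l r" by (cases T) auto
    ultimately show "T \<in> {T \<in> trees n. reduced T = C}"
      using T unfolding trees_def reduced_def by simp
  qed
  then show ?thesis unfolding Pst_def fw_def by simp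
qed


definition sw :: "bool list \<Rightarrow> nat \<Rightarrow> bool list" where
  "sw C j = take j C @ C ! (Suc j) # C ! j # drop (Suc (Suc j)) C"

lemma split2: "Suc j < length C \<Longrightarrow> C = take j C @ C!j # C!(Suc j) # drop (Suc (Suc j)) C"
  by (metis Cons_nth_drop_Suc Suc_lessD id_take_nth_drop)

lemma Rj: "Suc j < length C \<Longrightarrow> take j C @ drop (Suc j) C = take j C @ C!(Suc j) # drop (Suc (Suc j)) C"
  by (simp add: Cons_nth_drop_Suc)

lemma RSj: "Suc j < length C \<Longrightarrow> take (Suc j) C @ drop (Suc (Suc j)) C = take j C @ C!j # drop (Suc (Suc j)) C"
  by (simp add: take_Suc_conv_app_nth)

lemma W1_out: "(\<exists>A. C = False # A \<and> C' = True # A) \<longleftrightarrow> (C \<noteq> [] \<and> \<not> hd C \<and> C' = True # tl C)"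
  by (cases C) auto
lemma W1_in: "(\<exists>A. C' = False # A \<and> C = True # A) \<longleftrightarrow> (C \<noteq> [] \<and> hd C \<and> C' = False # tl C)"
  by (cases C) auto
lemma W2_out: "(\<exists>A. C = A @ [True] \<and> C' = A @ [False]) \<longleftrightarrow> (C \<noteq> [] \<and> last C \<and> C' = butlast C @ [False])"
proof
  assume h: "C \<noteq> [] \<and> last C \<and> C' = butlast C @ [False]"
  then have "C = butlast C @ [True]" using append_butlast_last_id[of C] by simp
  then show "\<exists>A. C = A @ [True] \<and> C' = A @ [False]" using h by blast
qed auto
lemma W2_in: "(\<exists>A. C' = A @ [True] \<and> C = A @ [False]) \<longleftrightarrow> (C \<noteq> [] \<and> \<not> last C \<and> C' = butlast C @ [True])"
proof
  assume h: "C \<noteq> [] \<and> \<not> last C \<and> C' = butlast C @ [True]"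
  then have "C = butlast C @ [False]" using append_butlast_last_id[of C] by simp
  then show "\<exists>A. C' = A @ [True] \<and> C = A @ [False]" using h by blast
qed auto

lemma split2': "Suc j < length C \<Longrightarrow> C!j = a \<Longrightarrow> C!Suc j = b \<Longrightarrow> C = take j C @ a # b # drop (Suc (Suc j)) C"
  using split2[of j C] by simp

lemma W3_out: "(\<exists>A A'. C = A @ [True, False] @ A' \<and> C' = A @ [False, True] @ A')
   \<longleftrightarrow> (\<exists>j \<in> {j. Suc j < length C \<and> C!j \<and> \<not> C!Suc j}. C' = sw C j)"
proof
  assume "\<exists>A A'. C = A @ [True, False] @ A' \<and> C' = A @ [False, True] @ A'"
  then obtain A A' where a: "C = A @ [True, False] @ A'" "C' = A @ [False, True] @ A'" by blast
  then show "\<exists>j \<in> {j. Suc j < length C \<and> C!j \<and> \<not> C!Suc j}. C' = sw C j"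
    by (intro bexI[of _ "length A"]) (auto simp: sw_def nth_append)
next
  assume "\<exists>j \<in> {j. Suc j < length C \<and> C!j \<and> \<not> C!Suc j}. C' = sw C j"
  then obtain j where j: "Suc j < length C" "C!j" "\<not> C!Suc j" "C' = sw C j" by blast
  have "C = take j C @ [True, False] @ drop (Suc (Suc j)) C" using split2'[OF j(1), of True False] j by simp
  moreover have "C' = take j C @ [False, True] @ drop (Suc (Suc j)) C" using j unfolding sw_def by simp
  ultimately show "\<exists>A A'. C = A @ [True, False] @ A' \<and> C' = A @ [False, True] @ A'" by blast
qed

lemma W3_in: "(\<exists>A A'. C' = A @ [True, False] @ A' \<and> C = A @ [False, True] @ A')
   \<longleftrightarrow> (\<exists>j \<in> {j. Suc j < length C \<and> \<not> C!j \<and> C!Suc j}. C' = sw C j)"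
proof
  assume "\<exists>A A'. C' = A @ [True, False] @ A' \<and> C = A @ [False, True] @ A'"
  then obtain A A' where a: "C' = A @ [True, False] @ A'" "C = A @ [False, True] @ A'" by blast
  then show "\<exists>j \<in> {j. Suc j < length C \<and> \<not> C!j \<and> C!Suc j}. C' = sw C j"
    by (intro bexI[of _ "length A"]) (auto simp: sw_def nth_append)
next
  assume "\<exists>j \<in> {j. Suc j < length C \<and> \<not> C!j \<and> C!Suc j}. C' = sw C j"
  then obtain j where j: "Suc j < length C" "\<not> C!j" "C!Suc j" "C' = sw C j" by blast
  have "C = take j C @ [False, True] @ drop (Suc (Suc j)) C" using split2'[OF j(1), of False True] j by simp
  moreover have "C' = take j C @ [True, False] @ drop (Suc (Suc j)) C" using j unfolding sw_def by simp
  ultimately show "\<exists>A A'. C' = A @ [True, False] @ A' \<and> C = A @ [False, True] @ A'" by blast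
qed

lemma sw_nth_lt: "i < j \<Longrightarrow> Suc j < length C \<Longrightarrow> sw C j ! i = C ! i"
  by (simp add: sw_def nth_append)
lemma sw_nth_eq: "Suc j < length C \<Longrightarrow> sw C j ! j = C ! Suc j"
  by (simp add: sw_def nth_append)

lemma sw_inj: "(\<And>j. j \<in> X \<Longrightarrow> Suc j < length C \<and> C!j \<noteq> C!Suc j) \<Longrightarrow> inj_on (sw C) X"
proof (rule inj_onI)
  fix i j assume h: "\<And>j. j \<in> X \<Longrightarrow> Suc j < length C \<and> C!j \<noteq> C!Suc j" and ij: "i \<in> X" "j \<in> X" "sw C i = sw C j"
  show "i = j"
  proof (rule ccontr)
    assume "i \<noteq> j"
    then consider "i < j" | "j < i" by linarith
    then show False
    proof cases
      case 1 then show False using h[OF ij(1)] h[OF ij(2)] sw_nth_lt[of i j C] sw_nth_eq[of i C] ij(3) by auto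
    next
      case 2 then show False using h[OF ij(1)] h[OF ij(2)] sw_nth_lt[of j i C] sw_nth_eq[of j C] ij(3) by auto
    qed
  qed
qed

lemma finite_configs: "finite (configs n)"
  using finite_lists_length_eq[of "UNIV :: bool set" n] unfolding configs_def by simp

lemma sum_single: "finite A \<Longrightarrow> (\<Sum>C'\<in>A. g C' * (if P \<and> C' = x then c else 0)) = (if P \<and> x \<in> A then g x * c else (0::real))"
proof (cases P)
  case True
  assume "finite A"
  have "(\<Sum>C'\<in>A. g C' * (if P \<and> C' = x then c else 0)) = (\<Sum>C'\<in>A. if C' = x then g x * c else 0)"
    by (rule sum.cong) (auto simp: True)
  then show ?thesis using True \<open>finite A\<close> by simp
qed simp

lemma sum_sw: "length C = n \<Longrightarrow> (\<And>j. j \<in> X \<Longrightarrow> Suc j < length C \<and> C!j \<noteq> C!Suc j) \<Longrightarrow>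
  (\<Sum>C'\<in>configs n. g C' * (if \<exists>j\<in>X. C' = sw C j then 1 else 0)) = (\<Sum>j\<in>X. (g (sw C j) :: real))"
proof -
  assume len: "length C = n" and h: "\<And>j. j \<in> X \<Longrightarrow> Suc j < length C \<and> C!j \<noteq> C!Suc j"
  have sub: "sw C ` X \<subseteq> configs n"
  proof
    fix x assume "x \<in> sw C ` X"
    then obtain j where j: "j \<in> X" "x = sw C j" by auto
    then have "Suc j < length C" using h by blast
    then show "x \<in> configs n" using j len by (simp add: configs_def sw_def)
  qed
  have "(\<Sum>C'\<in>configs n. g C' * (if \<exists>j\<in>X. C' = sw C j then 1 else 0))
      = (\<Sum>C'\<in>configs n. if C' \<in> sw C ` X then g C' else 0)"
    by (rule sum.cong) auto
  also have "\<dots> = sum g (configs n \<inter> sw C ` X)"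
    by (rule sum.inter_restrict[symmetric, OF finite_configs])
  also have "configs n \<inter> sw C ` X = sw C ` X" using sub by blast
  also have "sum g (sw C ` X) = sum (g \<circ> sw C) X" by (rule sum.reindex[OF sw_inj[OF h]])
  finally show ?thesis by simp
qed


lemma key:
  fixes a b :: real and C :: "bool list"
  assumes n: "length C = n" "n \<ge> 1" and ab: "0 < a" "0 < b"
  defines "X \<equiv> {j. Suc j < length C \<and> C!j \<and> \<not> C!Suc j}"
      and "Y \<equiv> {j. Suc j < length C \<and> \<not> C!j \<and> C!Suc j}"
  shows "fw a b C * ((if \<not> hd C then a else 0) + (if last C then b else 0) + (\<Sum>j\<in>X. 1))
       = (if hd C then fw a b (False # tl C) * a else 0) + (if \<not> last C then fw a b (butlast C @ [True]) * b else 0)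
         + (\<Sum>j\<in>Y. fw a b (sw C j))"
proof -
  let ?f = "fw a b"
  define R where "R i = ?f (take i C @ drop (Suc i) C)" for i
  define G where "G i = (if C!i then -1 else (1::real)) * R i" for i
  define B where "B j = R j + R (Suc j)" for j
  have RX: "?f C = B j" if "j \<in> X" for j
  proof -
    have j: "Suc j < length C" "C!j" "\<not> C!Suc j" using that X_def by auto
    define u where "u = take j C"
    define v where "v = drop (Suc (Suc j)) C"
    have "C = u @ True # False # v" using split2'[OF j(1), of True False] j u_def v_def by simp
    then have "?f C = ?f (u @ True # v) + ?f (u @ False # v)" using relA by simp
    moreover have "R j = ?f (u @ False # v)" using Rj[OF j(1)] j unfolding R_def u_def v_def by simp
    moreover have "R (Suc j) = ?f (u @ True # v)" using RSj[OF j(1)] j unfolding R_def u_def v_def by simp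
    ultimately show ?thesis unfolding B_def by simp
  qed
  have RY: "?f (sw C j) = B j" if "j \<in> Y" for j
  proof -
    have j: "Suc j < length C" "\<not> C!j" "C!Suc j" using that Y_def by auto
    define u where "u = take j C"
    define v where "v = drop (Suc (Suc j)) C"
    have "sw C j = u @ True # False # v" using j u_def v_def sw_def by simp
    then have "?f (sw C j) = ?f (u @ True # v) + ?f (u @ False # v)" using relA by simp
    moreover have "R j = ?f (u @ True # v)" using Rj[OF j(1)] j unfolding R_def u_def v_def by simp
    moreover have "R (Suc j) = ?f (u @ False # v)" using RSj[OF j(1)] j unfolding R_def u_def v_def by simp
    ultimately show ?thesis unfolding B_def by simp
  qed
  have Req: "R j = R (Suc j)" if "Suc j < length C" "C!j = C!Suc j" for j
    using Rj[OF that(1)] RSj[OF that(1)] that(2) unfolding R_def by simp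
  have step: "(if j \<in> X then B j else 0) - (if j \<in> Y then B j else 0) = G (Suc j) - G j"
    if "j < n - 1" for j
  proof -
    have j: "Suc j < length C" using that n by simp
    show ?thesis
      using Req[OF j] j unfolding X_def Y_def G_def B_def
      by (cases "C!j"; cases "C!Suc j") auto
  qed
  have XY: "(\<Sum>j\<in>X. B j) - (\<Sum>j\<in>Y. B j) = G (n - 1) - G 0"
  proof -
    have sX: "(\<Sum>j\<in>X. B j) = (\<Sum>j<n-1. if j \<in> X then B j else 0)"
    proof -
      have "{..<n-1} \<inter> X = X" using n unfolding X_def by auto
      then show ?thesis using sum.inter_restrict[of "{..<n-1}" B X] by simp
    qed
    have sY: "(\<Sum>j\<in>Y. B j) = (\<Sum>j<n-1. if j \<in> Y then B j else 0)"
    proof -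
      have "{..<n-1} \<inter> Y = Y" using n unfolding Y_def by auto
      then show ?thesis using sum.inter_restrict[of "{..<n-1}" B Y] by simp
    qed
    have "(\<Sum>j\<in>X. B j) - (\<Sum>j\<in>Y. B j) = (\<Sum>j<n-1. (if j \<in> X then B j else 0) - (if j \<in> Y then B j else 0))"
      unfolding sX sY by (simp add: sum_subtractf)
    also have "\<dots> = (\<Sum>j<n-1. G (Suc j) - G j)" by (rule sum.cong) (auto simp: step)
    also have "\<dots> = G (n - 1) - G 0" by (rule sum_lessThan_telescope)
    finally show ?thesis .
  qed
  have Cne: "C \<noteq> []" using n by auto
  have hd0: "hd C = C ! 0" using Cne by (simp add: hd_conv_nth)
  have lastn: "last C = C ! (n - 1)" using Cne n by (simp add: last_conv_nth)
  have R0: "R 0 = ?f (tl C)" unfolding R_def by (simp add: drop_Suc)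
  have Rn: "R (n - 1) = ?f (butlast C)" unfolding R_def using n
    by (simp add: butlast_conv_take)
  have L1: "a * ?f C = R 0" if "\<not> hd C"
  proof -
    have "C = False # tl C" using Cne that by (cases C) auto
    then have "?f C = (1/a) * ?f (tl C)" using relC by metis
    then show ?thesis using R0 ab by simp
  qed
  have L2: "a * ?f (False # tl C) = R 0" using relC[of a b "tl C"] R0 ab by simp
  have T1: "b * ?f C = R (n - 1)" if "last C"
  proof -
    have "C = butlast C @ [True]" using Cne that append_butlast_last_id[of C] by simp
    then have "?f C = (1/b) * ?f (butlast C)" using relB by metis
    then show ?thesis using Rn ab by simp
  qed
  have T2: "b * ?f (butlast C @ [True]) = R (n - 1)" using relB[of a b "butlast C"] Rn ab by simp
  have sumX: "?f C * (\<Sum>j\<in>X. 1) = (\<Sum>j\<in>X. B j)"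
  proof -
    have "?f C * (\<Sum>j\<in>X. 1) = (\<Sum>j\<in>X. ?f C)" using sum_distrib_left[of "?f C" "\<lambda>_. 1" X] by simp
    also have "\<dots> = (\<Sum>j\<in>X. B j)" by (rule sum.cong) (simp_all add: RX)
    finally show ?thesis .
  qed
  have sumY: "(\<Sum>j\<in>Y. ?f (sw C j)) = (\<Sum>j\<in>Y. B j)"
    by (rule sum.cong) (simp_all add: RY)
  have G0: "G 0 = (if hd C then - R 0 else R 0)" unfolding G_def hd0 by simp
  have Gn: "G (n - 1) = (if last C then - R (n - 1) else R (n - 1))" unfolding G_def lastn by simp
  show ?thesis
    unfolding sumY distrib_left sumX
    using XY G0 Gn L1 L2 T1 T2
    by (cases "hd C"; cases "last C") (auto simp: algebra_simps)
qed


theorem proposition1: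
  fixes \<alpha> \<beta> :: real and n :: nat
  assumes "n \<ge> 1" and "0 < \<alpha>" "\<alpha> \<le> 1" and "0 < \<beta>" "\<beta> \<le> 1"
  shows "\<forall>C \<in> configs n.
           Pst \<alpha> \<beta> n C * (\<Sum>C'\<in>configs n. W \<alpha> \<beta> C C')
         = (\<Sum>C'\<in>configs n. Pst \<alpha> \<beta> n C' * W \<alpha> \<beta> C' C)"
proof
  fix C assume "C \<in> configs n"
  then have len: "length C = n" by (simp add: configs_def)
  have Cne: "C \<noteq> []" using len assms(1) by auto
  define X where "X = {j. Suc j < length C \<and> C!j \<and> \<not> C!Suc j}"
  define Y where "Y = {j. Suc j < length C \<and> \<not> C!j \<and> C!Suc j}"
  let ?Z = "Zn \<alpha> \<beta> n"
  have fin: "finite (configs n)" by (rule finite_configs)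
  have c1: "True # tl C \<in> configs n" "False # tl C \<in> configs n"
    "butlast C @ [False] \<in> configs n" "butlast C @ [True] \<in> configs n"
    using len Cne by (auto simp: configs_def)
  have Wout: "W \<alpha> \<beta> C C' = 1 * (if C \<noteq> [] \<and> \<not> hd C \<and> C' = True # tl C then \<alpha> else 0)
     + 1 * (if C \<noteq> [] \<and> last C \<and> C' = butlast C @ [False] then \<beta> else 0)
     + 1 * (if \<exists>j\<in>X. C' = sw C j then 1 else 0)" for C'
    unfolding W_def X_def by (simp only: W1_out W2_out W3_out mult_1)
  have Win: "W \<alpha> \<beta> C' C = (if C \<noteq> [] \<and> hd C \<and> C' = False # tl C then \<alpha> else 0)
     + (if C \<noteq> [] \<and> \<not> last C \<and> C' = butlast C @ [True] then \<beta> else 0)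
     + (if \<exists>j\<in>Y. C' = sw C j then 1 else 0)" for C'
    unfolding W_def Y_def by (simp only: W1_in W2_in W3_in)
  have hX: "\<And>j. j \<in> X \<Longrightarrow> Suc j < length C \<and> C!j \<noteq> C!Suc j" unfolding X_def by auto
  have hY: "\<And>j. j \<in> Y \<Longrightarrow> Suc j < length C \<and> C!j \<noteq> C!Suc j" unfolding Y_def by auto
  have s1: "(\<Sum>C'\<in>configs n. W \<alpha> \<beta> C C') = (if \<not> hd C then \<alpha> else 0) + (if last C then \<beta> else 0) + (\<Sum>j\<in>X. 1)"
    unfolding Wout sum.distrib
    using sum_single[OF fin, where g="\<lambda>_. 1"] sum_sw[OF len hX, where g="\<lambda>_. 1"] c1 Cne by simp
  have s2: "(\<Sum>C'\<in>configs n. fw \<alpha> \<beta> C' * W \<alpha> \<beta> C' C) =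
      (if hd C then fw \<alpha> \<beta> (False # tl C) * \<alpha> else 0) + (if \<not> last C then fw \<alpha> \<beta> (butlast C @ [True]) * \<beta> else 0)
         + (\<Sum>j\<in>Y. fw \<alpha> \<beta> (sw C j))"
    unfolding Win distrib_left sum.distrib
    using sum_single[OF fin, where g="fw \<alpha> \<beta>"] sum_sw[OF len hY, where g="fw \<alpha> \<beta>"] c1 Cne by simp
  have "(\<Sum>C'\<in>configs n. Pst \<alpha> \<beta> n C' * W \<alpha> \<beta> C' C) = (\<Sum>C'\<in>configs n. fw \<alpha> \<beta> C' * W \<alpha> \<beta> C' C) / ?Z"
    unfolding sum_divide_distrib
    by (rule sum.cong) (auto simp: Pst_fw configs_def)
  also have "\<dots> = fw \<alpha> \<beta> C * (\<Sum>C'\<in>configs n. W \<alpha> \<beta> C C') / ?Z"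
    unfolding s1 s2 X_def Y_def
    using key[OF len assms(1) assms(2) assms(4)] by simp
  also have "\<dots> = Pst \<alpha> \<beta> n C * (\<Sum>C'\<in>configs n. W \<alpha> \<beta> C C')"
    using Pst_fw[OF len] by simp
  finally show "Pst \<alpha> \<beta> n C * (\<Sum>C'\<in>configs n. W \<alpha> \<beta> C C')
         = (\<Sum>C'\<in>configs n. Pst \<alpha> \<beta> n C' * W \<alpha> \<beta> C' C)" by simp
qed

end
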